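(* Let $\Gamma_i\in\mathbb{R}^{m\times m}$ with $\|\Gamma_i\|_2\le1$ for all $i\in[n]$, where $\|\cdot\|_2$ is the matrix operator norm. Let $\mathbf{P}\in\mathbb{R}^{nm\times nm}$ have $n^2$ blocks such that the $(i,j)$th block is $\Gamma_i\Gamma_j^\top$ if $i\ne j$, and $I$ otherwise. Then $\mathbf{P}\succeq0$ and $\|\mathbf{P}\|_*\le mn$, where $\|\cdot\|_*$ denotes the nuclear norm. *)

theory Defs
  imports Complex_Main "Jordan_Normal_Form.Char_Poly" "HOL-Computational_Algebra.Polynomial"
begin

definition euclid_norm :: "real vec \<Rightarrow> real" where
  "euclid_norm v = sqrt (\<Sum>i<dim_vec v. (v $ i)^2)"

definition op_norm2 :: "real mat \<Rightarrow> real" where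
  "op_norm2 A = Sup {euclid_norm (A *\<^sub>v x) | x. x \<in> carrier_vec (dim_col A) \<and> euclid_norm x \<le> 1}"

text \<open>Singular values (with multiplicity): square roots of the eigenvalues of A^T A,
  i.e. of the roots of its characteristic polynomial.\<close>
definition singular_values :: "real mat \<Rightarrow> real multiset" where
  "singular_values A = image_mset sqrt (proots (char_poly (transpose_mat A * A)))"

definition nuclear_norm :: "real mat \<Rightarrow> real" where
  "nuclear_norm A = sum_mset (singular_values A)"

definition psd :: "real mat \<Rightarrow> bool" where
  "psd P \<longleftrightarrow> P \<in> carrier_mat (dim_row P) (dim_row P) \<and> transpose_mat P = P \<and>
     (\<forall>x \<in> carrier_vec (dim_row P). x \<bullet> (P *\<^sub>v x) \<ge> 0)"

text \<open>The nm x nm block matrix whose (i,j) block (0-based, i,j < n) is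
  Gamma_i Gamma_j^T for i \<noteq> j and the m x m identity for i = j.\<close>
definition block_P :: "nat \<Rightarrow> nat \<Rightarrow> (nat \<Rightarrow> real mat) \<Rightarrow> real mat" where
  "block_P n m \<Gamma> = mat (n*m) (n*m) (\<lambda>(r,c).
     let i = r div m; a = r mod m; j = c div m; b = c mod m in
     if i = j then (1\<^sub>m m) $$ (a,b) else (\<Gamma> i * transpose_mat (\<Gamma> j)) $$ (a,b))"

end

theory Submission
  imports Defs "Jordan_Normal_Form.Schur_Decomposition"
begin


lemma psd_complex_eig:
  fixes A :: "real mat"
  assumes "psd A" "eigenvalue (map_mat complex_of_real A) e"
  shows "e = of_real (Re e) \<and> Re e \<ge> 0"
proof -
  define N where "N = dim_row A"
  have A: "A \<in> carrier_mat N N" and sym: "transpose_mat A = A"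
    and pos: "\<And>x. x \<in> carrier_vec N \<Longrightarrow> x \<bullet> (A *\<^sub>v x) \<ge> 0"
    using assms(1) unfolding psd_def N_def by auto
  have symij: "A $$ (i,j) = A $$ (j,i)" if "i < N" "j < N" for i j
    using arg_cong[OF sym, of "\<lambda>M. M $$ (j,i)"] that A by auto
  obtain v where v: "v \<in> carrier_vec N" "v \<noteq> 0\<^sub>v N"
    and ev: "map_mat complex_of_real A *\<^sub>v v = e \<cdot>\<^sub>v v"
    using assms(2) unfolding eigenvalue_def eigenvector_def N_def by auto
  define a where "a i = Re (v $ i)" for i
  define b where "b i = Im (v $ i)" for i
  have row: "(\<Sum>j<N. complex_of_real (A $$ (i,j)) * v $ j) = e * v $ i" if "i < N" for i
  proof -
    have "(map_mat complex_of_real A *\<^sub>v v) $ i = e * v $ i" using ev that v by simp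
    thus ?thesis using that A v by (simp add: scalar_prod_def row_def lessThan_atLeast0 mult.commute)
  qed
  define S where "S = (\<Sum>i<N. cnj (v $ i) * (\<Sum>j<N. complex_of_real (A $$ (i,j)) * v $ j))"
  define T where "T = (\<Sum>i<N. (a i)^2 + (b i)^2)"
  have S1: "S = e * of_real T"
  proof -
    have "S = (\<Sum>i<N. e * (cnj (v $ i) * v $ i))" unfolding S_def
      by (rule sum.cong, simp, subst row, auto)
    also have "\<dots> = e * (\<Sum>i<N. cnj (v $ i) * v $ i)" by (simp add: sum_distrib_left)
    also have "(\<Sum>i<N. cnj (v $ i) * v $ i) = of_real T" unfolding T_def of_real_sum
      by (rule sum.cong, simp, simp add: a_def b_def complex_eq_iff power2_eq_square)
    finally show ?thesis .
  qed
  have S2: "S = (\<Sum>i<N. \<Sum>j<N. complex_of_real (A $$ (i,j)) * (cnj (v $ i) * v $ j))"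
    unfolding S_def by (simp add: sum_distrib_left algebra_simps)
  have ReS: "Re S = (\<Sum>i<N. \<Sum>j<N. A $$ (i,j) * (a i * a j + b i * b j))"
    unfolding S2 Re_sum by (simp add: a_def b_def algebra_simps)
  have ImS: "Im S = (\<Sum>i<N. \<Sum>j<N. A $$ (i,j) * (a i * b j - b i * a j))"
    unfolding S2 Im_sum by (simp add: a_def b_def algebra_simps)
  have "(\<Sum>i<N. \<Sum>j<N. A $$ (i,j) * (b i * a j)) = (\<Sum>j<N. \<Sum>i<N. A $$ (i,j) * (b i * a j))"
    by (rule sum.swap)
  also have "\<dots> = (\<Sum>i<N. \<Sum>j<N. A $$ (i,j) * (a i * b j))"
    by (rule sum.cong, simp, rule sum.cong, simp, subst symij, auto)
  finally have "Im S = 0" unfolding ImS by (simp add: right_diff_distrib sum_subtractf)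
  have quad: "(\<Sum>i<N. \<Sum>j<N. A $$ (i,j) * (c i * c j)) \<ge> 0" for c
  proof -
    have "0 \<le> vec N c \<bullet> (A *\<^sub>v vec N c)" by (rule pos, simp)
    also have "\<dots> = (\<Sum>i<N. c i * (\<Sum>j<N. A $$ (i,j) * c j))"
      using A by (simp add: scalar_prod_def row_def lessThan_atLeast0)
    also have "\<dots> = (\<Sum>i<N. \<Sum>j<N. A $$ (i,j) * (c i * c j))"
      by (simp add: sum_distrib_left algebra_simps)
    finally show ?thesis .
  qed
  have "Re S \<ge> 0" unfolding ReS using quad[of a] quad[of b]
    by (simp add: distrib_left sum.distrib)
  have "T > 0"
  proof -
    obtain i where i: "i < N" "v $ i \<noteq> 0" using v by (metis eq_vecI carrier_vecD index_zero_vec)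
    have "(a i)^2 + (b i)^2 > 0" using i(2) unfolding a_def b_def
      by (auto simp: complex_eq_iff sum_power2_gt_zero_iff)
    moreover have "(a i)^2 + (b i)^2 \<le> T" unfolding T_def
      by (rule member_le_sum, use i in auto)
    ultimately show ?thesis by linarith
  qed
  have e: "e = S / of_real T" using S1 \<open>T > 0\<close> by simp
  have "Im e = 0" unfolding e using \<open>Im S = 0\<close> by (simp add: Im_divide_of_real)
  moreover have "Re e \<ge> 0" unfolding e using \<open>Re S \<ge> 0\<close> \<open>T > 0\<close> by (simp add: Re_divide_of_real)
  ultimately show ?thesis by (simp add: complex_eq_iff)
qed


lemma trace_comm:
  fixes X Y :: "'a::comm_ring_1 mat"
  assumes "X \<in> carrier_mat n k" "Y \<in> carrier_mat k n"
  shows "(\<Sum>i<n. (X * Y) $$ (i,i)) = (\<Sum>i<k. (Y * X) $$ (i,i))"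
proof -
  have "(\<Sum>i<n. (X * Y) $$ (i,i)) = (\<Sum>i<n. \<Sum>j<k. X $$ (i,j) * Y $$ (j,i))"
    using assms by (intro sum.cong) (auto simp: scalar_prod_def lessThan_atLeast0)
  also have "\<dots> = (\<Sum>j<k. \<Sum>i<n. Y $$ (j,i) * X $$ (i,j))"
    by (subst sum.swap) (simp add: mult.commute)
  also have "\<dots> = (\<Sum>i<k. (Y * X) $$ (i,i))"
    using assms by (intro sum.cong) (auto simp: scalar_prod_def lessThan_atLeast0)
  finally show ?thesis .
qed

lemma upper_triangular_sq:
  fixes B :: "'a::comm_ring_1 mat"
  assumes B: "B \<in> carrier_mat N N" and ut: "upper_triangular B"
  shows "upper_triangular (B * B)" "diag_mat (B * B) = map (\<lambda>x. x * x) (diag_mat B)"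
proof -
  have z: "B $$ (i,j) = 0" if "j < i" "i < N" for i j using ut that B by auto
  show "upper_triangular (B * B)"
  proof (rule upper_triangularI)
    fix i j assume "i < dim_row (B * B)" "j < i"
    hence i: "i < N" and ji: "j < i" using B by auto
    have "(B * B) $$ (i,j) = (\<Sum>k<N. B $$ (i,k) * B $$ (k,j))"
      using B i ji by (auto simp: scalar_prod_def lessThan_atLeast0)
    also have "\<dots> = 0"
    proof (rule sum.neutral, intro ballI)
      fix k assume "k \<in> {..<N}"
      thus "B $$ (i,k) * B $$ (k,j) = 0" using z[of k i] z[of j k] i ji
        by (cases "k < i") auto
    qed
    finally show "(B * B) $$ (i,j) = 0" .
  qed
  have "(B * B) $$ (i,i) = B $$ (i,i) * B $$ (i,i)" if i: "i < N" for i
  proof -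
    have "(B * B) $$ (i,i) = (\<Sum>k<N. B $$ (i,k) * B $$ (k,i))"
      using B i by (auto simp: scalar_prod_def lessThan_atLeast0)
    also have "\<dots> = B $$ (i,i) * B $$ (i,i) + (\<Sum>k\<in>{..<N}-{i}. B $$ (i,k) * B $$ (k,i))"
      by (rule sum.remove, use i in auto)
    also have "(\<Sum>k\<in>{..<N}-{i}. B $$ (i,k) * B $$ (k,i)) = 0"
    proof (rule sum.neutral, intro ballI)
      fix k assume "k \<in> {..<N}-{i}"
      thus "B $$ (i,k) * B $$ (k,i) = 0" using z[of k i] z[of i k] i
        by (cases "k < i") auto
    qed
    finally show ?thesis by simp
  qed
  thus "diag_mat (B * B) = map (\<lambda>x. x * x) (diag_mat B)"
    using B by (auto simp: diag_mat_def)
qed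


lemma proots_linear_prod:
  fixes xs :: "'a::idom list"
  shows "proots (\<Prod>a\<leftarrow>xs. [:- a, 1:]) = mset xs"
proof (induction xs)
  case (Cons a xs)
  have nz: "(\<Prod>a\<leftarrow>xs. [:- a, 1:]) \<noteq> 0" by (auto simp: prod_list_zero_iff)
  have "proots (\<Prod>x\<leftarrow>a#xs. [:- x, 1:]) = proots [:- a, 1:] + proots (\<Prod>x\<leftarrow>xs. [:- x, 1:])"
    unfolding list.map prod_list.Cons by (rule proots_mult, simp, rule nz)
  thus ?case using Cons by simp
qed simp

lemma psd_nuclear:
  fixes A :: "real mat"
  assumes psd: "psd A"
  shows "nuclear_norm A = (\<Sum>i<dim_row A. A $$ (i,i))"
proof -
  define N where "N = dim_row A"
  have A: "A \<in> carrier_mat N N" and sym: "transpose_mat A = A"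
    using psd unfolding psd_def N_def by auto
  define Ac where "Ac = map_mat complex_of_real A"
  have Ac: "Ac \<in> carrier_mat N N" using A unfolding Ac_def by auto
  obtain es where es: "char_poly Ac = (\<Prod>a\<leftarrow>es. [:- a, 1:])"
    using char_poly_factorized[OF Ac] by blast
  have esr: "a = of_real (Re a) \<and> Re a \<ge> 0" if "a \<in> set es" for a
  proof -
    have "poly (char_poly Ac) a = 0" unfolding es using that
      by (simp add: poly_prod_list prod_list_zero_iff)
    hence "eigenvalue Ac a" using eigenvalue_root_char_poly[OF Ac] by simp
    thus ?thesis using psd_complex_eig[OF psd] unfolding Ac_def by blast
  qed
  define ls where "ls = map Re es"
  have es_ls: "es = map complex_of_real ls" unfolding ls_def
    using esr by (induction es) auto
  have ls_nn: "\<And>l. l \<in> set ls \<Longrightarrow> l \<ge> 0" unfolding ls_def using esr by auto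
  have "map_poly complex_of_real (char_poly A) = char_poly Ac"
    unfolding Ac_def by (rule of_real_hom.char_poly_hom[OF A, symmetric])
  also have "\<dots> = map_poly complex_of_real (\<Prod>a\<leftarrow>ls. [:- a, 1:])"
  proof -
    interpret rp: map_poly_comm_ring_hom complex_of_real ..
    have "map_poly complex_of_real (\<Prod>a\<leftarrow>ls'. [:- a, 1:]) = (\<Prod>a\<leftarrow>ls'. [:- complex_of_real a, 1:])" for ls'
    proof (induction ls')
      case (Cons a ls')
      have "map_poly complex_of_real (\<Prod>x\<leftarrow>a#ls'. [:-x,1:]) =
         map_poly complex_of_real [:-a,1:] * map_poly complex_of_real (\<Prod>x\<leftarrow>ls'. [:-x,1:])"
        by (simp only: list.map prod_list.Cons rp.hom_mult)
      also have "map_poly complex_of_real [:-a,1:] = [:-complex_of_real a,1:]" by simp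
      finally show ?case unfolding Cons by simp
    qed simp
    thus ?thesis unfolding es es_ls by (simp add: o_def)
  qed
  finally have cpeq: "map_poly complex_of_real (char_poly A) = map_poly complex_of_real (\<Prod>a\<leftarrow>ls. [:- a, 1:])" .
  have cpA: "char_poly A = (\<Prod>a\<leftarrow>ls. [:- a, 1:])"
  proof -
    interpret rp2: map_poly_inj_comm_ring_hom complex_of_real ..
    show ?thesis using cpeq by (rule rp2.injectivity)
  qed
  obtain B P Q where sd: "schur_decomposition A ls = (B,P,Q)" by (cases "schur_decomposition A ls") auto
  from schur_decomposition[OF A cpA sd] have wit: "similar_mat_wit A B P Q"
    and ut: "upper_triangular B" and dB: "diag_mat B = ls" by auto
  note W = similar_mat_witD2[OF A wit]
  have B: "B \<in> carrier_mat N N" and P: "P \<in> carrier_mat N N"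
    and Q: "Q \<in> carrier_mat N N" and QP: "Q * P = 1\<^sub>m N" and ABPQ: "A = P * B * Q"
    by (rule W(5), rule W(6), rule W(7), rule W(2), rule W(3))
  have wit2: "similar_mat_wit (A ^\<^sub>m 2) (B ^\<^sub>m 2) P Q" by (rule similar_mat_wit_pow[OF wit])
  have AA: "A ^\<^sub>m 2 = A * A" using A by (simp add: numeral_2_eq_2)
  have BB: "B ^\<^sub>m 2 = B * B" using B by (simp add: numeral_2_eq_2)
  have "char_poly (transpose_mat A * A) = char_poly (B * B)"
    using wit2 unfolding AA BB sym by (intro char_poly_similar) (auto simp: similar_mat_def)
  also have "\<dots> = (\<Prod>a\<leftarrow>map (\<lambda>x. x * x) ls. [:- a, 1:])"
    using char_poly_upper_triangular[OF mult_carrier_mat[OF B B] upper_triangular_sq(1)[OF B ut]] B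
      upper_triangular_sq(2)[OF B ut] dB by auto
  finally have cp2: "char_poly (transpose_mat A * A) = (\<Prod>a\<leftarrow>map (\<lambda>x. x * x) ls. [:- a, 1:])" .
  have "proots (char_poly (transpose_mat A * A)) = mset (map (\<lambda>x. x * x) ls)"
    unfolding cp2 by (rule proots_linear_prod)
  moreover have "sum_mset (image_mset sqrt (mset (map (\<lambda>x. x * x) xs))) = sum_list (map abs xs)" for xs :: "real list"
    by (induction xs) auto
  ultimately have "nuclear_norm A = sum_list (map abs ls)"
    unfolding nuclear_norm_def singular_values_def by simp
  also have "\<dots> = sum_list ls" using ls_nn
    by (induction ls) auto
  also have "\<dots> = (\<Sum>i<N. B $$ (i,i))" unfolding dB[symmetric] diag_mat_def using B
    by (simp add: sum_list_map_eq_sum_count lessThan_atLeast0 sum_set_upt_conv_sum_list_nat[symmetric])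
  also have "\<dots> = (\<Sum>i<N. (Q * P * B) $$ (i,i))" using QP B by simp
  also have "\<dots> = (\<Sum>i<N. (P * B * Q) $$ (i,i))"
    using trace_comm[of Q N N "P * B"] P Q B by (simp add: assoc_mult_mat[of Q N N P N B N])
  finally show ?thesis unfolding N_def ABPQ[symmetric] .
qed



lemma euclid_norm_smult: "euclid_norm (c \<cdot>\<^sub>v v) = \<bar>c\<bar> * euclid_norm v"
proof -
  have "(\<Sum>i<dim_vec v. (c * v $ i)^2) = c^2 * (\<Sum>i<dim_vec v. (v $ i)^2)"
    by (simp add: sum_distrib_left power_mult_distrib)
  thus ?thesis unfolding euclid_norm_def by (simp add: real_sqrt_mult)
qed

lemma opnorm_bound:
  fixes G :: "real mat"
  assumes G: "G \<in> carrier_mat m m" and op: "op_norm2 G \<le> 1"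
  shows "(\<Sum>a<m. (\<Sum>k<m. G $$ (a,k) * x k)^2) \<le> (\<Sum>k<m. (x k)^2)"
proof -
  define S where "S = {euclid_norm (G *\<^sub>v x) | x. x \<in> carrier_vec (dim_col G) \<and> euclid_norm x \<le> 1}"
  define C where "C = (\<Sum>a<m. (\<Sum>k<m. \<bar>G $$ (a,k)\<bar>)^2)"
  have bdd: "bdd_above S"
  proof (rule bdd_aboveI)
    fix s assume "s \<in> S"
    then obtain y where y: "y \<in> carrier_vec m" "euclid_norm y \<le> 1" and s: "s = euclid_norm (G *\<^sub>v y)"
      using G unfolding S_def by auto
    have yk: "\<bar>y $ k\<bar> \<le> 1" if "k < m" for k
    proof -
      have "(y $ k)^2 \<le> (\<Sum>i<m. (y $ i)^2)" by (rule member_le_sum, use that in auto)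
      also have "\<dots> \<le> 1" using y unfolding euclid_norm_def by (simp add: real_sqrt_le_1_iff)
      finally show ?thesis by (simp add: abs_square_le_1)
    qed
    have "(\<Sum>a<m. ((G *\<^sub>v y) $ a)^2) \<le> C" unfolding C_def
    proof (rule sum_mono)
      fix a assume a: "a \<in> {..<m}"
      have "\<bar>(G *\<^sub>v y) $ a\<bar> = \<bar>\<Sum>k<m. G $$ (a,k) * y $ k\<bar>"
        using a G y by (simp add: scalar_prod_def lessThan_atLeast0 mult.commute)
      also have "\<dots> \<le> (\<Sum>k<m. \<bar>G $$ (a,k) * y $ k\<bar>)" by (rule sum_abs)
      also have "\<dots> \<le> (\<Sum>k<m. \<bar>G $$ (a,k)\<bar>)"
        by (rule sum_mono, auto simp: abs_mult intro!: mult_left_le[OF yk])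
      finally show "((G *\<^sub>v y) $ a)^2 \<le> (\<Sum>k<m. \<bar>G $$ (a,k)\<bar>)^2"
        by (metis abs_ge_zero order_trans power2_abs power_mono)
    qed
    thus "s \<le> sqrt C" unfolding s euclid_norm_def using G by simp
  qed
  have main: "euclid_norm (G *\<^sub>v v) \<le> euclid_norm v" if v: "v \<in> carrier_vec m" for v
  proof (cases "euclid_norm v = 0")
    case True
    have "(\<Sum>i<m. (v $ i)^2) = 0" using True v unfolding euclid_norm_def by simp
    hence "\<forall>i\<in>{..<m}. (v $ i)^2 = 0" by (subst sum_nonneg_eq_0_iff[symmetric]) auto
    hence "v = 0\<^sub>v m" using v by (intro eq_vecI) auto
    thus ?thesis using G True by (simp add: euclid_norm_def)
  next
    case False
    define r where "r = euclid_norm v"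
    have nn: "0 \<le> (\<Sum>i<dim_vec v. (v $ i)^2)" by (intro sum_nonneg) auto
    have r: "r > 0" using False nn unfolding r_def euclid_norm_def by auto
    define u where "u = (1 / r) \<cdot>\<^sub>v v"
    have "euclid_norm u = 1" unfolding u_def euclid_norm_smult r_def[symmetric] using r by simp
    hence "euclid_norm (G *\<^sub>v u) \<in> S" unfolding S_def using G v u_def by auto
    hence "euclid_norm (G *\<^sub>v u) \<le> 1" using cSup_upper[OF _ bdd] op unfolding op_norm2_def S_def[symmetric]
      by fastforce
    moreover have "G *\<^sub>v u = (1 / r) \<cdot>\<^sub>v (G *\<^sub>v v)" unfolding u_def using G v by (simp add: mult_mat_vec)
    ultimately have "(1/r) * euclid_norm (G *\<^sub>v v) \<le> 1" using r by (simp add: euclid_norm_smult)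
    thus ?thesis using r unfolding r_def[symmetric] by (simp add: field_simps)
  qed
  have "euclid_norm (G *\<^sub>v vec m x) \<le> euclid_norm (vec m x)" by (rule main, simp)
  hence "sqrt (\<Sum>a<m. (\<Sum>k<m. G $$ (a,k) * x k)^2) \<le> sqrt (\<Sum>k<m. (x k)^2)"
    unfolding euclid_norm_def using G by (simp add: scalar_prod_def lessThan_atLeast0 mult.commute)
  thus ?thesis by simp
qed

lemma opnorm_bound_T:
  fixes G :: "real mat"
  assumes G: "G \<in> carrier_mat m m" and op: "op_norm2 G \<le> 1"
  shows "(\<Sum>k<m. (\<Sum>a<m. y a * G $$ (a,k))^2) \<le> (\<Sum>a<m. (y a)^2)"
proof -
  define z where "z k = (\<Sum>a<m. y a * G $$ (a,k))" for k
  define w where "w a = (\<Sum>k<m. G $$ (a,k) * z k)" for a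
  have "(\<Sum>k<m. (z k)^2) = (\<Sum>k<m. \<Sum>a<m. y a * G $$ (a,k) * z k)"
    unfolding power2_eq_square by (subst (2) z_def) (simp add: sum_distrib_left mult_ac)
  also have "\<dots> = (\<Sum>a<m. y a * w a)" unfolding w_def
    by (subst sum.swap) (simp add: sum_distrib_left mult.assoc)
  also have "\<dots> \<le> (\<Sum>a<m. ((y a)^2 + (w a)^2) / 2)"
  proof (rule sum_mono)
    fix a
    have "0 \<le> (y a - w a)^2" by simp
    thus "y a * w a \<le> ((y a)^2 + (w a)^2) / 2" by (simp add: power2_diff field_simps)
  qed
  also have "\<dots> = ((\<Sum>a<m. (y a)^2) + (\<Sum>a<m. (w a)^2)) / 2"
    by (simp add: sum_divide_distrib[symmetric] sum.distrib)
  also have "(\<Sum>a<m. (w a)^2) \<le> (\<Sum>k<m. (z k)^2)" unfolding w_def by (rule opnorm_bound[OF G op])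
  finally show ?thesis unfolding z_def by simp
qed


lemma sum_blocks:
  fixes n m :: nat and f :: "nat \<Rightarrow> 'a::comm_monoid_add"
  shows "(\<Sum>r<n*m. f r) = (\<Sum>i<n. \<Sum>a<m. f (i*m+a))"
proof -
  have add: "(\<Sum>r<k+l. f r) = (\<Sum>r<k. f r) + (\<Sum>a<l. f (k+a))" for k l
    by (induction l) (auto simp: add.assoc)
  show ?thesis
  proof (induction n)
    case (Suc n)
    have "(\<Sum>r<Suc n*m. f r) = (\<Sum>r<n*m+m. f r)" by (simp add: add.commute)
    also have "\<dots> = (\<Sum>r<n*m. f r) + (\<Sum>a<m. f (n*m+a))" by (rule add)
    finally show ?case using Suc by simp
  qed simp
qed

lemma quad_gram:
  fixes u :: "'i \<Rightarrow> real"
  assumes "finite I" "finite K"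
  shows "(\<Sum>p\<in>I. \<Sum>q\<in>I. u p * u q * (\<Sum>k\<in>K. h p k * h q k)) = (\<Sum>k\<in>K. (\<Sum>p\<in>I. u p * h p k)^2)"
proof -
  have "(\<Sum>k\<in>K. (\<Sum>p\<in>I. u p * h p k)^2) = (\<Sum>k\<in>K. \<Sum>p\<in>I. \<Sum>q\<in>I. u p * h p k * (u q * h q k))"
    unfolding power2_eq_square by (simp add: sum_product)
  also have "\<dots> = (\<Sum>p\<in>I. \<Sum>k\<in>K. \<Sum>q\<in>I. u p * h p k * (u q * h q k))" by (rule sum.swap)
  also have "\<dots> = (\<Sum>p\<in>I. \<Sum>q\<in>I. \<Sum>k\<in>K. u p * h p k * (u q * h q k))"
    by (rule sum.cong, simp, rule sum.swap)
  also have "\<dots> = (\<Sum>p\<in>I. \<Sum>q\<in>I. u p * u q * (\<Sum>k\<in>K. h p k * h q k))"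
    by (simp add: sum_distrib_left mult_ac)
  finally show ?thesis by simp
qed

lemma block_P_entry:
  assumes G: "\<And>i. i < n \<Longrightarrow> \<Gamma> i \<in> carrier_mat m m"
    and rc: "r < n*m" "c < n*m"
  shows "block_P n m \<Gamma> $$ (r,c) = (if r div m = c div m then (if r mod m = c mod m then 1 else 0)
     else (\<Sum>k<m. \<Gamma> (r div m) $$ (r mod m, k) * \<Gamma> (c div m) $$ (c mod m, k)))"
proof -
  have m: "m > 0" using rc by (cases m) auto
  have i: "r div m < n" "c div m < n" using rc by (auto simp: less_mult_imp_div_less)
  have a: "r mod m < m" "c mod m < m" using m by auto
  have Gi: "\<Gamma> (r div m) \<in> carrier_mat m m" "\<Gamma> (c div m) \<in> carrier_mat m m" using G i by auto
  show ?thesis unfolding block_P_def using rc a Gi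
    by (simp add: Let_def scalar_prod_def lessThan_atLeast0)
qed

lemma block_P_entry2:
  assumes G: "\<And>i. i < n \<Longrightarrow> \<Gamma> i \<in> carrier_mat m m"
    and ia: "i < n" "a < m" and jb: "j < n" "b < m"
  shows "block_P n m \<Gamma> $$ (i*m+a, j*m+b) = (if i = j then (if a = b then 1 else 0)
     else (\<Sum>k<m. \<Gamma> i $$ (a, k) * \<Gamma> j $$ (b, k)))"
proof -
  have lt: "x*m+y < n*m" if "x < n" "y < m" for x y
  proof -
    have "x*m+y < x*m+m" using that by simp
    also have "\<dots> = Suc x * m" by simp
    also have "\<dots> \<le> n * m" using that by (intro mult_le_mono1) simp
    finally show ?thesis .
  qed
  show ?thesis using block_P_entry[OF G lt[OF ia] lt[OF jb]] ia jb by simp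
qed

theorem lemma18:
  fixes n m :: nat and \<Gamma> :: "nat \<Rightarrow> real mat"
  assumes G: "\<And>i. i < n \<Longrightarrow> \<Gamma> i \<in> carrier_mat m m"
      and op: "\<And>i. i < n \<Longrightarrow> op_norm2 (\<Gamma> i) \<le> 1"
  shows "psd (block_P n m \<Gamma>) \<and> nuclear_norm (block_P n m \<Gamma>) \<le> real (m * n)"
proof -
  define P where "P = block_P n m \<Gamma>"
  have Pc: "P \<in> carrier_mat (n*m) (n*m)" unfolding P_def block_P_def by simp
  have sym: "transpose_mat P = P"
  proof (rule eq_matI)
    fix r c assume "r < dim_row P" "c < dim_col P"
    hence rc: "r < n*m" "c < n*m" using Pc by auto
    show "transpose_mat P $$ (r,c) = P $$ (r,c)"
      using rc Pc unfolding P_def by (simp add: block_P_entry[OF G] mult.commute)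
  qed (use Pc in auto)
  define g where "g i a k = \<Gamma> i $$ (a,k)" for i a k
  define M where "M i a j b = (\<Sum>k<m. g i a k * g j b k)" for i a j b
  define E where "E i a j b = (if i = j then (if a = b then 1 else 0) else M i a j b)" for i a j b :: nat
  define D where "D i a b = (if a = b then 1 else 0) - M i a i b" for i a b :: nat
  have quad: "0 \<le> x \<bullet> (P *\<^sub>v x)" if x: "x \<in> carrier_vec (n*m)" for x
  proof -
    define X where "X i a = x $ (i*m+a)" for i a
    have "x \<bullet> (P *\<^sub>v x) = (\<Sum>r<n*m. x $ r * (\<Sum>c<n*m. P $$ (r,c) * x $ c))"
      using x Pc by (simp add: scalar_prod_def lessThan_atLeast0 mult.commute)
    also have "\<dots> = (\<Sum>i<n. \<Sum>a<m. X i a * (\<Sum>j<n. \<Sum>b<m. E i a j b * X j b))"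
      unfolding sum_blocks X_def
      by (intro sum.cong refl arg_cong2[where f="(*)"])
        (simp add: P_def E_def M_def g_def block_P_entry2[OF G])
    also have "\<dots> = (\<Sum>i<n. \<Sum>a<m. \<Sum>j<n. \<Sum>b<m. X i a * X j b * M i a j b)
       + (\<Sum>i<n. \<Sum>a<m. \<Sum>j<n. \<Sum>b<m. X i a * X j b * (if i = j then D i a b else 0))"
      unfolding sum.distrib[symmetric] sum_distrib_left
      by (intro sum.cong refl) (simp add: E_def D_def algebra_simps)
    finally have eq: "x \<bullet> (P *\<^sub>v x) = \<dots>" .
    define I where "I = {..<n} \<times> {..<m}"
    have cart: "(\<Sum>i<n. \<Sum>a<m. F i a) = (\<Sum>p\<in>I. F (fst p) (snd p))" for F :: "nat \<Rightarrow> nat \<Rightarrow> real"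
      unfolding I_def by (simp add: sum.cartesian_product split_def)
    have T1: "0 \<le> (\<Sum>i<n. \<Sum>a<m. \<Sum>j<n. \<Sum>b<m. X i a * X j b * M i a j b)"
    proof -
      have "(\<Sum>i<n. \<Sum>a<m. \<Sum>j<n. \<Sum>b<m. X i a * X j b * M i a j b)
         = (\<Sum>p\<in>I. \<Sum>q\<in>I. X (fst p) (snd p) * X (fst q) (snd q) *
            (\<Sum>k\<in>{..<m}. g (fst p) (snd p) k * g (fst q) (snd q) k))"
        unfolding cart M_def ..
      also have "\<dots> = (\<Sum>k\<in>{..<m}. (\<Sum>p\<in>I. X (fst p) (snd p) * g (fst p) (snd p) k)^2)"
        by (rule quad_gram) (auto simp: I_def)
      also have "\<dots> \<ge> 0" by (intro sum_nonneg) auto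
      finally show ?thesis by simp
    qed
    have T2: "0 \<le> (\<Sum>i<n. \<Sum>a<m. \<Sum>j<n. \<Sum>b<m. X i a * X j b * (if i = j then D i a b else 0))"
    proof -
      have "(\<Sum>i<n. \<Sum>a<m. \<Sum>j<n. \<Sum>b<m. X i a * X j b * (if i = j then D i a b else 0))
          = (\<Sum>i<n. \<Sum>a<m. \<Sum>b<m. X i a * X i b * D i a b)"
      proof (rule sum.cong[OF refl], rule sum.cong[OF refl])
        fix i a assume i: "i \<in> {..<n}" and "a \<in> {..<m}"
        have "(\<Sum>j<n. \<Sum>b<m. X i a * X j b * (if i = j then D i a b else 0))
           = (\<Sum>j<n. if i = j then (\<Sum>b<m. X i a * X j b * D i a b) else 0)"
          by (intro sum.cong refl) auto
        also have "\<dots> = (\<Sum>b<m. X i a * X i b * D i a b)" using i by simp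
        finally show "(\<Sum>j<n. \<Sum>b<m. X i a * X j b * (if i = j then D i a b else 0))
           = (\<Sum>b<m. X i a * X i b * D i a b)" .
      qed
      also have "\<dots> \<ge> 0"
      proof (rule sum_nonneg)
        fix i assume i: "i \<in> {..<n}"
        have e1: "(\<Sum>a<m. \<Sum>b<m. X i a * X i b * D i a b)
          = (\<Sum>a<m. \<Sum>b<m. X i a * X i b * (if a = b then 1 else 0)) - (\<Sum>a<m. \<Sum>b<m. X i a * X i b * M i a i b)"
          unfolding D_def sum_subtractf[symmetric] by (intro sum.cong refl) (simp add: algebra_simps)
        have e2: "(\<Sum>a<m. \<Sum>b<m. X i a * X i b * (if a = b then 1 else 0)) = (\<Sum>a<m. (X i a)^2)"
          by (intro sum.cong refl) (auto simp: power2_eq_square if_distrib cong: if_cong)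
        have e3: "(\<Sum>a<m. \<Sum>b<m. X i a * X i b * M i a i b) = (\<Sum>k\<in>{..<m}. (\<Sum>a\<in>{..<m}. X i a * \<Gamma> i $$ (a,k))^2)"
          unfolding M_def g_def by (rule quad_gram) auto
        have e4: "(\<Sum>k\<in>{..<m}. (\<Sum>a\<in>{..<m}. X i a * \<Gamma> i $$ (a,k))^2) \<le> (\<Sum>a<m. (X i a)^2)" using opnorm_bound_T[OF G op] i by auto
        show "0 \<le> (\<Sum>a<m. \<Sum>b<m. X i a * X i b * D i a b)" unfolding e1 e2 e3 using e4 by simp
      qed
      finally show ?thesis .
    qed
    show ?thesis unfolding eq using T1 T2 by simp
  qed
  have psdP: "psd P" unfolding psd_def using Pc sym quad by auto
  have "nuclear_norm P = (\<Sum>r<n*m. P $$ (r,r))" using psd_nuclear[OF psdP] Pc by simp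
  also have "\<dots> = (\<Sum>r<n*m. 1)" unfolding P_def by (intro sum.cong refl) (simp add: block_P_entry[OF G])
  finally have "nuclear_norm P = real (m * n)" by simp
  thus ?thesis using psdP unfolding P_def by simp
qed

end
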